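(* Let $\phi:V\to V$ be a continuous coherency preserver that is not degenerate, with $\phi(0)=0$, $\varphi_0$ nonconstant, and $0$ generic. Then the map $\varphi_0:\mathcal{Q}\to\mathcal{Q}$ is a homeomorphism.
   Context: Fix an integer $n\ge4$, let $V=\mathbb{R}^n$ with its standard topology and $q(x_1,\dots,x_n)=x_n^2-\sum_{k=1}^{n-1}x_k^2$. Points $x,y$ are coherent when $q(x-y)=0$; $\mathcal{C}(a)=\{m: q(m-a)=0\}$. A coherency preserver is a map $\phi:V\to V$ with $q(b-a)=0\Rightarrow q(\phi(b)-\phi(a))=0$; it is degenerate when its range is included in some $\mathcal{C}(c)$. Let $\mathcal{Q}=\{(x_1,\dots,x_{n-1},1): \sum_{k=1}^{n-1}x_k^2=1\}$ with the subspace topology. For a non-degenerate continuous coherency preserver $\phi$, for every $a\in V$ and $p\in\mathcal{Q}$ there is a unique $p'\in\mathcal{Q}$ with $\phi(a+\mathbb{R}p)\subset\phi(a)+\mathbb{R}p'$; one sets $\varphi_a(p):=p'$. Let $\mathcal{W}$ be the set of points $b\in V$ such that $\phi^{-1}(\{b\})$ has nonempty interior in $V$; a point $a$ is generic if $\phi(a)\notin\mathcal{W}$. *)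

theory Defs
  imports "HOL-Analysis.Analysis"
begin

text \<open>V = R^n is modelled as real^'n::{finite,linorder} with a finite, linearly ordered index type;
  the distinguished (time) coordinate x_n is the largest index.\<close>

definition tidx :: "'n::{finite,linorder}" where
  "tidx = Max (UNIV :: 'n set)"

definition qf :: "real^'n::{finite,linorder} \<Rightarrow> real" where
  "qf x = (x $ tidx)^2 - (\<Sum>k\<in>UNIV - {tidx}. (x $ k)^2)"

definition coherent :: "real^'n::{finite,linorder} \<Rightarrow> real^'n::{finite,linorder} \<Rightarrow> bool" where
  "coherent x y \<longleftrightarrow> qf (x - y) = 0"

definition lightcone :: "real^'n::{finite,linorder} \<Rightarrow> (real^'n::{finite,linorder}) set" where
  "lightcone a = {m. qf (m - a) = 0}"

definition coherency_preserver :: "(real^'n::{finite,linorder} \<Rightarrow> real^'n::{finite,linorder}) \<Rightarrow> bool" where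
  "coherency_preserver \<phi> \<longleftrightarrow> (\<forall>a b. qf (b - a) = 0 \<longrightarrow> qf (\<phi> b - \<phi> a) = 0)"

definition degenerate :: "(real^'n::{finite,linorder} \<Rightarrow> real^'n::{finite,linorder}) \<Rightarrow> bool" where
  "degenerate \<phi> \<longleftrightarrow> (\<exists>c. range \<phi> \<subseteq> lightcone c)"

definition Qset :: "(real^'n::{finite,linorder}) set" where
  "Qset = {x. x $ tidx = 1 \<and> (\<Sum>k\<in>UNIV - {tidx}. (x $ k)^2) = 1}"

definition varphi :: "(real^'n::{finite,linorder} \<Rightarrow> real^'n::{finite,linorder}) \<Rightarrow> real^'n::{finite,linorder} \<Rightarrow> real^'n::{finite,linorder} \<Rightarrow> real^'n::{finite,linorder}" where
  "varphi \<phi> a p = (THE p'. p' \<in> Qset \<and> (\<forall>t::real. \<exists>s::real. \<phi> (a + t *\<^sub>R p) = \<phi> a + s *\<^sub>R p'))"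

definition Wset :: "(real^'n::{finite,linorder} \<Rightarrow> real^'n::{finite,linorder}) \<Rightarrow> (real^'n::{finite,linorder}) set" where
  "Wset \<phi> = {b. interior (\<phi> -` {b}) \<noteq> {}}"

definition generic :: "(real^'n::{finite,linorder} \<Rightarrow> real^'n::{finite,linorder}) \<Rightarrow> real^'n::{finite,linorder} \<Rightarrow> bool" where
  "generic \<phi> a \<longleftrightarrow> \<phi> a \<notin> Wset \<phi>"

end

theory Submission
  imports Defs
begin


definition et :: "real^'n::{finite,linorder}" where "et = axis tidx 1"
definition sp :: "real^'n::{finite,linorder} \<Rightarrow> real^'n::{finite,linorder}" where "sp x = x - (x$tidx) *\<^sub>R et"
definition Bf :: "real^'n::{finite,linorder} \<Rightarrow> real^'n::{finite,linorder} \<Rightarrow> real" where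
  "Bf x y = x$tidx * y$tidx - sp x \<bullet> sp y"

lemma sp_nth: "sp x $ k = (if k = tidx then 0 else x $ k)"
  by (simp add: sp_def et_def axis_def)
lemma et_nth: "(et::real^'n::{finite,linorder}) $ k = (if k = tidx then 1 else 0)"
  by (simp add: et_def axis_def)
lemma sp_et_inner: "sp x \<bullet> et = 0"
  by (simp add: inner_vec_def sp_nth et_nth if_distrib cong: if_cong)
lemma sp_tidx[simp]: "sp x $ tidx = 0" by (simp add: sp_nth)
lemma et_tidx[simp]: "(et::real^'n::{finite,linorder}) $ tidx = 1" by (simp add: et_nth)
lemma sp_et[simp]: "sp (et::real^'n::{finite,linorder}) = 0"
  by (simp add: sp_def)
lemma decomp: "x = sp x + (x$tidx) *\<^sub>R et" by (simp add: sp_def)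

lemma sp_inner_sum: "sp x \<bullet> sp y = (\<Sum>k\<in>UNIV - {tidx}. x$k * y$k)"
proof -
  have "sp x \<bullet> sp y = (\<Sum>k\<in>UNIV. sp x $ k * sp y $ k)" by (simp add: inner_vec_def)
  also have "\<dots> = (\<Sum>k\<in>UNIV - {tidx}. sp x $ k * sp y $ k)"
    by (rule sum.mono_neutral_right) auto
  also have "\<dots> = (\<Sum>k\<in>UNIV - {tidx}. x$k * y$k)"
    by (rule sum.cong) (auto simp: sp_nth)
  finally show ?thesis .
qed

lemma qf_Bf: "qf x = Bf x x"
  by (simp add: qf_def Bf_def sp_inner_sum power2_eq_square)

lemma sp_add: "sp (x + y) = sp x + sp y" by (simp add: sp_def algebra_simps)
lemma sp_diff: "sp (x - y) = sp x - sp y" by (simp add: sp_def algebra_simps)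
lemma sp_scale: "sp (c *\<^sub>R x) = c *\<^sub>R sp x" by (simp add: sp_def algebra_simps)
lemma sp_minus: "sp (- x) = - sp x" by (simp add: sp_def algebra_simps)

lemma Bf_sym: "Bf x y = Bf y x" by (simp add: Bf_def inner_commute mult.commute)
lemma Bf_add1: "Bf (x + y) z = Bf x z + Bf y z" by (simp add: Bf_def sp_add inner_add_left algebra_simps)
lemma Bf_add2: "Bf z (x + y) = Bf z x + Bf z y" by (simp add: Bf_def sp_add inner_add_right algebra_simps)
lemma Bf_diff1: "Bf (x - y) z = Bf x z - Bf y z" by (simp add: Bf_def sp_diff inner_diff_left algebra_simps)
lemma Bf_diff2: "Bf z (x - y) = Bf z x - Bf z y" by (simp add: Bf_def sp_diff inner_diff_right algebra_simps)
lemma Bf_scale1: "Bf (c *\<^sub>R x) z = c * Bf x z" by (simp add: Bf_def sp_scale algebra_simps)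
lemma Bf_scale2: "Bf z (c *\<^sub>R x) = c * Bf z x" by (simp add: Bf_def sp_scale algebra_simps)
lemma Bf_zero1[simp]: "Bf 0 z = 0" and Bf_zero2[simp]: "Bf z 0 = 0" by (simp_all add: Bf_def sp_def)

lemma qf_diff: "qf (x - y) = qf x - 2 * Bf x y + qf y"
  by (simp add: qf_Bf Bf_diff1 Bf_diff2 Bf_sym[of y x])
lemma qf_add: "qf (x + y) = qf x + 2 * Bf x y + qf y"
  by (simp add: qf_Bf Bf_add1 Bf_add2 Bf_sym[of y x])
lemma qf_scale: "qf (c *\<^sub>R x) = c^2 * qf x"
  by (simp add: qf_Bf Bf_scale1 Bf_scale2 power2_eq_square)

lemma Qset_iff: "p \<in> Qset \<longleftrightarrow> p$tidx = 1 \<and> sp p \<bullet> sp p = 1"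
  by (simp add: Qset_def sp_inner_sum power2_eq_square)

lemma Q_qf: "p \<in> Qset \<Longrightarrow> qf p = 0"
  by (simp add: Qset_iff qf_Bf Bf_def)

lemma qf0_time1_Q: "qf x = 0 \<Longrightarrow> x$tidx = 1 \<Longrightarrow> x \<in> Qset"
  by (simp add: Qset_iff qf_Bf Bf_def)

lemma null_parallel:
  assumes "qf u = 0" "qf v = 0" "Bf u v = 0"
  shows "v$tidx *\<^sub>R u = u$tidx *\<^sub>R v"
proof -
  define a b U V where "a = u$tidx" "b = v$tidx" "U = sp u" "V = sp v"
  have UU: "U \<bullet> U = a*a" and VV: "V \<bullet> V = b*b" and UV: "U \<bullet> V = a*b"
    using assms by (auto simp: qf_Bf Bf_def a_b_U_V_def)
  have "(b *\<^sub>R U - a *\<^sub>R V) \<bullet> (b *\<^sub>R U - a *\<^sub>R V) = b*b*(U\<bullet>U) - 2*a*b*(U \<bullet> V) + a*a*(V\<bullet>V)"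
    by (simp add: inner_diff_left inner_diff_right inner_commute algebra_simps)
  also have "\<dots> = 0" by (simp add: UU VV UV algebra_simps)
  finally have "b *\<^sub>R U = a *\<^sub>R V" by simp
  then have "b *\<^sub>R (U + a *\<^sub>R et) = a *\<^sub>R (V + b *\<^sub>R et)"
    by (simp add: algebra_simps)
  then show ?thesis using decomp[of u] decomp[of v] by (simp add: a_b_U_V_def)
qed

lemma null_time_nz:
  assumes "qf u = 0" "u \<noteq> 0" shows "u$tidx \<noteq> 0"
proof
  assume h: "u$tidx = 0"
  then have "sp u \<bullet> sp u = 0" using assms by (simp add: qf_Bf Bf_def)
  then have "sp u = 0" by simp
  then show False using decomp[of u] h assms by simp
qed

lemma Bf_Q_eq:
  assumes "r \<in> Qset" "s \<in> Qset" "Bf r s = 0" shows "r = s"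
  using null_parallel[OF Q_qf[OF assms(1)] Q_qf[OF assms(2)] assms(3)] assms
  by (simp add: Qset_iff)

lemma Bf_et: "Bf et p = p$tidx" by (simp add: Bf_def)



lemma isCont_Bf[continuous_intros]:
  fixes f g :: "'a::t2_space \<Rightarrow> real^'n::{finite,linorder}"
  shows "isCont f a \<Longrightarrow> isCont g a \<Longrightarrow> isCont (\<lambda>x. Bf (f x) (g x)) a"
  unfolding Bf_def sp_def by (intro continuous_intros)

lemma isCont_qf[continuous_intros]:
  fixes f :: "'a::t2_space \<Rightarrow> real^'n::{finite,linorder}"
  shows "isCont f a \<Longrightarrow> isCont (\<lambda>x. qf (f x)) a"
  unfolding qf_Bf by (intro continuous_intros)

locale cp =
  fixes \<phi> :: "real^'n::{finite,linorder} \<Rightarrow> real^'n::{finite,linorder}"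
  assumes cont: "continuous_on UNIV \<phi>"
    and pres: "coherency_preserver \<phi>"
    and nondeg: "\<not> degenerate \<phi>"
    and phi0: "\<phi> 0 = 0"
begin

lemma isCont_phi: "isCont \<phi> x"
  using cont by (simp add: continuous_on_eq_continuous_at)

lemma pres': "qf (b - a) = 0 \<Longrightarrow> qf (\<phi> b - \<phi> a) = 0"
  using pres by (auto simp: coherency_preserver_def)

lemma null_line: "p \<in> Qset \<Longrightarrow> qf (\<phi> (t *\<^sub>R p)) = 0"
  using pres'[of "t *\<^sub>R p" 0] by (simp add: qf_scale Q_qf phi0)

lemma Bf_line: assumes "p \<in> Qset" shows "Bf (\<phi> (s *\<^sub>R p)) (\<phi> (t *\<^sub>R p)) = 0"
proof -
  have "qf (t *\<^sub>R p - s *\<^sub>R p) = 0"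
    using assms by (simp add: scaleR_diff_left[symmetric] qf_scale Q_qf del: scaleR_diff_left)
  then have "qf (\<phi> (t *\<^sub>R p) - \<phi> (s *\<^sub>R p)) = 0" by (rule pres')
  then show ?thesis using null_line[OF assms, of s] null_line[OF assms, of t]
    by (simp add: qf_diff Bf_sym[of "\<phi> (t *\<^sub>R p)"])
qed

lemma coh_point:
  assumes "p \<in> Qset" "Bf z p \<noteq> 0"
  shows "qf (\<phi> z - \<phi> ((qf z / (2 * Bf z p)) *\<^sub>R p)) = 0"
proof (rule pres')
  show "qf (z - (qf z / (2 * Bf z p)) *\<^sub>R p) = 0"
    using assms by (simp add: qf_diff qf_scale Q_qf Bf_scale2)
qed

lemma nonvanish:
  assumes p: "p \<in> Qset" shows "\<exists>t. \<phi> (t *\<^sub>R p) \<noteq> 0"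
proof (rule ccontr)
  assume "\<not> ?thesis"
  then have z: "\<And>t. \<phi> (t *\<^sub>R p) = 0" by simp
  have good: "qf (\<phi> x) = 0" if "Bf x p \<noteq> 0" for x
    using coh_point[OF p that] z by simp
  have all: "qf (\<phi> x) = 0" for x
  proof (rule ccontr)
    assume ne: "qf (\<phi> x) \<noteq> 0"
    have "isCont (\<lambda>y. qf (\<phi> y)) x" by (intro continuous_intros isCont_phi)
    from continuous_at_avoid[OF this ne] obtain e where e: "e > 0"
      "\<And>y. dist x y < e \<Longrightarrow> qf (\<phi> y) \<noteq> 0" by blast
    show False
    proof (cases "Bf x p = 0")
      case False then show ?thesis using good ne by blast
    next
      case True
      let ?y = "x + (e/2) *\<^sub>R et"
      have "Bf ?y p = e/2" using True p by (simp add: Bf_add1 Bf_scale1 Bf_et Qset_iff)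
      then have "qf (\<phi> ?y) = 0" using good e by simp
      moreover have "dist x ?y < e" using e by (simp add: dist_norm et_def)
      ultimately show False using e by blast
    qed
  qed
  have "range \<phi> \<subseteq> lightcone 0" using all by (auto simp: lightcone_def)
  then show False using nondeg by (auto simp: degenerate_def)
qed

lemma line_rep:
  assumes p: "p \<in> Qset" and nz: "\<phi> (t0 *\<^sub>R p) \<noteq> 0"
  shows "varphi \<phi> 0 p = (1 / \<phi> (t0 *\<^sub>R p) $ tidx) *\<^sub>R \<phi> (t0 *\<^sub>R p)"
    and "varphi \<phi> 0 p \<in> Qset"
    and "\<And>t. \<phi> (t *\<^sub>R p) = \<phi> (t *\<^sub>R p) $ tidx *\<^sub>R varphi \<phi> 0 p"
proof -
  define u where "u = \<phi> (t0 *\<^sub>R p)"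
  define a where "a = u $ tidx"
  define r where "r = (1/a) *\<^sub>R u"
  have qu: "qf u = 0" using null_line[OF p] by (simp add: u_def)
  have a: "a \<noteq> 0" using null_time_nz[OF qu] nz by (simp add: a_def u_def)
  have rQ: "r \<in> Qset"
    by (rule qf0_time1_Q) (use qu a in \<open>simp_all add: r_def qf_scale a_def\<close>)
  have rep: "\<phi> (t *\<^sub>R p) = \<phi> (t *\<^sub>R p) $ tidx *\<^sub>R r" for t
  proof -
    have "\<phi> (t *\<^sub>R p) $ tidx *\<^sub>R u = a *\<^sub>R \<phi> (t *\<^sub>R p)"
    proof -
      have "Bf u (\<phi> (t *\<^sub>R p)) = 0" using Bf_line[OF p] by (simp add: u_def)
      from null_parallel[OF qu null_line[OF p] this] show ?thesis by (simp add: a_def)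
    qed
    then have "(1/a) *\<^sub>R (\<phi> (t *\<^sub>R p) $ tidx *\<^sub>R u) = (1/a) *\<^sub>R (a *\<^sub>R \<phi> (t *\<^sub>R p))" by simp
    then show ?thesis using a by (simp add: r_def)
  qed
  have vp: "varphi \<phi> 0 p = r"
    unfolding varphi_def
  proof (rule the_equality)
    show "r \<in> Qset \<and> (\<forall>t. \<exists>s. \<phi> (0 + t *\<^sub>R p) = \<phi> 0 + s *\<^sub>R r)"
      using rQ rep by (auto simp: phi0)
  next
    fix p' assume h: "p' \<in> Qset \<and> (\<forall>t. \<exists>s. \<phi> (0 + t *\<^sub>R p) = \<phi> 0 + s *\<^sub>R p')"
    then obtain s where s: "u = s *\<^sub>R p'" by (auto simp: phi0 u_def)
    have "a = s" using h s by (simp add: a_def Qset_iff)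
    then show "p' = r" using s a by (simp add: r_def)
  qed
  show "varphi \<phi> 0 p = (1 / \<phi> (t0 *\<^sub>R p) $ tidx) *\<^sub>R \<phi> (t0 *\<^sub>R p)"
    by (simp add: vp r_def a_def u_def)
  show "varphi \<phi> 0 p \<in> Qset" using vp rQ by simp
  show "\<And>t. \<phi> (t *\<^sub>R p) = \<phi> (t *\<^sub>R p) $ tidx *\<^sub>R varphi \<phi> 0 p" using rep vp by simp
qed

lemma vp_Q: "p \<in> Qset \<Longrightarrow> varphi \<phi> 0 p \<in> Qset"
  using nonvanish line_rep(2) by blast

lemma vp_rep: "p \<in> Qset \<Longrightarrow> \<phi> (t *\<^sub>R p) = \<phi> (t *\<^sub>R p) $ tidx *\<^sub>R varphi \<phi> 0 p"
  using nonvanish line_rep(3) by blast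

end

context cp begin
lemma vp_cont: "continuous_on Qset (varphi \<phi> 0)"
  unfolding continuous_on_eq_continuous_within
proof
  fix p0 :: "real^'n::{finite,linorder}" assume p0: "p0 \<in> Qset"
  obtain t0 where nz: "\<phi> (t0 *\<^sub>R p0) \<noteq> 0" using nonvanish[OF p0] by blast
  define hT where "hT p = \<phi> (t0 *\<^sub>R p) $ tidx" for p
  have h0: "hT p0 \<noteq> 0" using null_time_nz[OF null_line[OF p0] nz] by (simp add: hT_def)
  have c1: "isCont (\<lambda>p. \<phi> (t0 *\<^sub>R p)) p0"
    by (rule isCont_o2[OF _ isCont_phi]) (intro continuous_intros)
  have ch: "isCont hT p0" unfolding hT_def using c1 by (rule isCont_vec_nth)
  from continuous_at_avoid[OF ch h0] obtain d where d: "d > 0" "\<And>y. dist p0 y < d \<Longrightarrow> hT y \<noteq> 0" by blast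
  define G where "G p = (1 / hT p) *\<^sub>R \<phi> (t0 *\<^sub>R p)" for p
  have cG0: "isCont G p0" unfolding G_def
    by (rule continuous_intros isCont_divide ch c1 h0 continuous_const)+
  have cG: "continuous (at p0 within Qset) G" using cG0 by (rule continuous_at_imp_continuous_at_within)
  show "continuous (at p0 within Qset) (varphi \<phi> 0)"
  proof (rule continuous_transform_within[OF cG d(1) p0])
    fix p assume p: "p \<in> Qset" "dist p p0 < d"
    then have "hT p \<noteq> 0" using d(2)[of p] by (simp add: dist_commute)
    then have "\<phi> (t0 *\<^sub>R p) \<noteq> 0" by (auto simp: hT_def)
    from line_rep(1)[OF p(1) this] show "G p = varphi \<phi> 0 p" by (simp add: G_def hT_def)
  qed
qed
end


lemma inner_et: "x \<bullet> (et::real^'n::{finite,linorder}) = x $ tidx"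
  by (simp add: et_def inner_axis)

lemma sp_spatial: "v $ tidx = 0 \<Longrightarrow> sp (v + c *\<^sub>R et) = v"
  by (simp add: sp_add sp_scale) (simp add: sp_def)

lemma Bf_form: "v $ tidx = 0 \<Longrightarrow> p \<in> Qset \<Longrightarrow> Bf (v + c *\<^sub>R (et::real^'n::{finite,linorder})) p = c - v \<bullet> sp p"
  by (simp add: Bf_def sp_spatial Qset_iff)

lemma unit_collinear:
  fixes x y z :: "'a::real_inner"
  assumes "x \<bullet> x = 1" "y \<bullet> y = 1" "z \<bullet> z = 1" "x \<noteq> y" "z - x = c *\<^sub>R (y - x)"
  shows "z = x \<or> z = y"
proof -
  have z: "z = x + c *\<^sub>R (y - x)" using assms(5) by (simp add: algebra_simps)
  have "(x - y) \<bullet> (x - y) \<noteq> 0" using assms(4) by simp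
  moreover have "(x - y) \<bullet> (x - y) = 2 - 2 * (x \<bullet> y)" using assms(1,2)
    by (simp add: inner_diff_left inner_diff_right inner_commute[of y x])
  ultimately have k: "2 - 2 * (x \<bullet> y) \<noteq> 0" by simp
  have "z \<bullet> z = x \<bullet> x + 2 * c * (x \<bullet> y - x \<bullet> x) + c^2 * (x \<bullet> x - 2 * (x \<bullet> y) + y \<bullet> y)"
    unfolding z by (simp add: inner_add_left inner_add_right inner_diff_left inner_diff_right inner_commute[of y x] power2_eq_square algebra_simps)
  then have "z \<bullet> z = 1 + 2 * c * (x \<bullet> y - 1) + c^2 * (2 - 2 * (x \<bullet> y))"
    using assms(1,2) by simp
  then have "c * (c - 1) * (2 - 2 * (x \<bullet> y)) = 0" using assms(3) by (simp add: algebra_simps power2_eq_square)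
  then have "c = 0 \<or> c = 1" using k by simp
  then show ?thesis using z by auto
qed

lemma solve2:
  fixes d2 d3 :: "'a::real_inner"
  assumes n2: "\<And>c. d2 \<noteq> c *\<^sub>R d3" and n3: "\<And>c. d3 \<noteq> c *\<^sub>R d2"
  shows "\<exists>v \<in> span {d2, d3}. v \<bullet> d2 = m2 \<and> v \<bullet> d3 = m3"
proof -
  have d3: "d3 \<noteq> 0" using n3[of 0] by simp
  have d2: "d2 \<noteq> 0" using n2[of 0] by simp
  define e2 where "e2 = d2 - ((d2 \<bullet> d3) / (d3 \<bullet> d3)) *\<^sub>R d3"
  define e3 where "e3 = d3 - ((d3 \<bullet> d2) / (d2 \<bullet> d2)) *\<^sub>R d2"
  have e2nz: "e2 \<noteq> 0" using n2[of "(d2 \<bullet> d3) / (d3 \<bullet> d3)"] by (auto simp: e2_def)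
  have e3nz: "e3 \<noteq> 0" using n3[of "(d3 \<bullet> d2) / (d2 \<bullet> d2)"] by (auto simp: e3_def)
  have o23: "e2 \<bullet> d3 = 0" using d3 by (simp add: e2_def inner_diff_left)
  have o32: "e3 \<bullet> d2 = 0" using d2 by (simp add: e3_def inner_diff_left)
  have s2: "e2 \<bullet> d2 = e2 \<bullet> e2"
  proof -
    have "d2 = e2 + ((d2 \<bullet> d3) / (d3 \<bullet> d3)) *\<^sub>R d3" by (simp add: e2_def)
    then have "e2 \<bullet> d2 = e2 \<bullet> (e2 + ((d2 \<bullet> d3) / (d3 \<bullet> d3)) *\<^sub>R d3)" by simp
    also have "\<dots> = e2 \<bullet> e2" by (simp only: inner_add_right inner_scaleR_right o23 mult_zero_right add_0_right)
    finally show ?thesis .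
  qed
  have s3: "e3 \<bullet> d3 = e3 \<bullet> e3"
  proof -
    have "d3 = e3 + ((d3 \<bullet> d2) / (d2 \<bullet> d2)) *\<^sub>R d2" by (simp add: e3_def)
    then have "e3 \<bullet> d3 = e3 \<bullet> (e3 + ((d3 \<bullet> d2) / (d2 \<bullet> d2)) *\<^sub>R d2)" by simp
    also have "\<dots> = e3 \<bullet> e3" by (simp only: inner_add_right inner_scaleR_right o32 mult_zero_right add_0_right)
    finally show ?thesis .
  qed
  define v where "v = (m2 / (e2 \<bullet> e2)) *\<^sub>R e2 + (m3 / (e3 \<bullet> e3)) *\<^sub>R e3"
  have "v \<bullet> d2 = m2" using e2nz by (simp add: v_def inner_add_left o32 s2)
  moreover have "v \<bullet> d3 = m3" using e3nz by (simp add: v_def inner_add_left o23 s3)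
  moreover have "v \<in> span {d2, d3}" unfolding v_def e2_def e3_def
    by (intro span_add span_scale span_diff span_base) auto
  ultimately show ?thesis by blast
qed



lemma span_orth:
  assumes "v \<in> span S" "\<And>x. x \<in> S \<Longrightarrow> x \<bullet> e = 0"
  shows "v \<bullet> e = 0"
proof -
  have "subspace {x. x \<bullet> e = 0}"
    by (auto simp: subspace_def inner_add_left)
  from span_induct[OF assms(1) this] assms(2) show ?thesis by auto
qed

lemma card3_le: "card {a, b, c} \<le> 3"
  by (simp add: card_insert_if)

lemma solve3:
  fixes p1 p2 p3 :: "real^'n::{finite,linorder}"
  assumes n4: "CARD('n) \<ge> 4" and Q: "p1 \<in> Qset" "p2 \<in> Qset" "p3 \<in> Qset"
    and ne: "p1 \<noteq> p2" "p1 \<noteq> p3" "p2 \<noteq> p3"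
  shows "\<exists>y::real^'n::{finite,linorder}. Bf y p1 = l1 \<and> Bf y p2 = l2 \<and> Bf y p3 = l3 \<and> qf y \<noteq> 0"
proof -
  define u1 u2 u3 where "u1 = sp p1" "u2 = sp p2" "u3 = sp p3"
  have uu: "u1 \<bullet> u1 = 1" "u2 \<bullet> u2 = 1" "u3 \<bullet> u3 = 1" using Q by (auto simp: Qset_iff u1_u2_u3_def)
  have ut: "u1 $ tidx = 0" "u2 $ tidx = 0" "u3 $ tidx = 0" by (auto simp: u1_u2_u3_def)
  have pu: "p1 = u1 + et" "p2 = u2 + et" "p3 = u3 + et"
    using Q decomp[of p1] decomp[of p2] decomp[of p3] by (auto simp: Qset_iff u1_u2_u3_def)
  have une: "u1 \<noteq> u2" "u1 \<noteq> u3" "u2 \<noteq> u3" using ne pu by auto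
  define d2 d3 where "d2 = u2 - u1" "d3 = u3 - u1"
  have n2: "d2 \<noteq> c *\<^sub>R d3" for c
  proof
    assume "d2 = c *\<^sub>R d3"
    then have "u2 = u1 \<or> u2 = u3" using unit_collinear[OF uu(1) uu(3) uu(2) une(2), of c]
      by (simp add: d2_d3_def)
    then show False using une by auto
  qed
  have n3: "d3 \<noteq> c *\<^sub>R d2" for c
  proof
    assume "d3 = c *\<^sub>R d2"
    then have "u3 = u1 \<or> u3 = u2" using unit_collinear[OF uu(1) uu(2) uu(3) une(1), of c]
      by (simp add: d2_d3_def)
    then show False using une by auto
  qed
  obtain v where v: "v \<in> span {d2, d3}" "v \<bullet> d2 = l1 - l2" "v \<bullet> d3 = l1 - l3"
    using solve2[OF n2 n3] by blast
  have "v \<bullet> et = 0"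
    by (rule span_orth[OF v(1)]) (auto simp: d2_d3_def inner_et ut)
  then have vt: "v $ tidx = 0" by (simp add: inner_et)
  define y0 where "y0 = v + (l1 + v \<bullet> u1) *\<^sub>R et"
  have b1: "Bf y0 p1 = (l1 + v \<bullet> u1) - v \<bullet> u1" using Bf_form[OF vt Q(1)] by (simp add: y0_def u1_u2_u3_def)
  have b2: "Bf y0 p2 = (l1 + v \<bullet> u1) - v \<bullet> u2" using Bf_form[OF vt Q(2)] by (simp add: y0_def u1_u2_u3_def)
  have b3: "Bf y0 p3 = (l1 + v \<bullet> u1) - v \<bullet> u3" using Bf_form[OF vt Q(3)] by (simp add: y0_def u1_u2_u3_def)
  have "v \<bullet> d2 = v \<bullet> u2 - v \<bullet> u1" "v \<bullet> d3 = v \<bullet> u3 - v \<bullet> u1" by (simp_all add: d2_d3_def inner_diff_right)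
  then have y0: "Bf y0 p1 = l1" "Bf y0 p2 = l2" "Bf y0 p3 = l3" using b1 b2 b3 v(2,3) by linarith+
  have dimlt: "dim {et, d2, d3} < DIM(real^'n::{finite,linorder})"
  proof -
    have "dim {et, d2, d3} \<le> card {et, d2, d3}" by (rule dim_le_card') simp
    also have "\<dots> \<le> 3" by (rule card3_le)
    finally show ?thesis using n4 by simp
  qed
  obtain w' where w': "w' \<noteq> 0" "\<And>y. y \<in> span {et, d2, d3} \<Longrightarrow> orthogonal w' y"
    using orthogonal_to_subspace_exists[OF dimlt] by metis
  have wo: "w' \<bullet> et = 0" "w' \<bullet> d2 = 0" "w' \<bullet> d3 = 0"
    using w'(2)[of et] w'(2)[of d2] w'(2)[of d3] by (auto simp: orthogonal_def span_base)
  have w't: "w' $ tidx = 0" using wo(1) by (simp add: inner_et)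
  define w where "w = w' + (w' \<bullet> u1) *\<^sub>R et"
  have c1: "Bf w p1 = (w' \<bullet> u1) - w' \<bullet> u1" using Bf_form[OF w't Q(1)] by (simp add: w_def u1_u2_u3_def)
  have c2: "Bf w p2 = (w' \<bullet> u1) - w' \<bullet> u2" using Bf_form[OF w't Q(2)] by (simp add: w_def u1_u2_u3_def)
  have c3: "Bf w p3 = (w' \<bullet> u1) - w' \<bullet> u3" using Bf_form[OF w't Q(3)] by (simp add: w_def u1_u2_u3_def)
  have "w' \<bullet> d2 = w' \<bullet> u2 - w' \<bullet> u1" "w' \<bullet> d3 = w' \<bullet> u3 - w' \<bullet> u1" by (simp_all add: d2_d3_def inner_diff_right)
  then have w: "Bf w p1 = 0" "Bf w p2 = 0" "Bf w p3 = 0" using c1 c2 c3 wo(2,3) by linarith+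
  have qw: "qf w = (w' \<bullet> u1)^2 - w' \<bullet> w'"
    using w't by (simp add: qf_Bf Bf_def w_def sp_spatial power2_eq_square)
  have qwnz: "qf w \<noteq> 0"
  proof
    assume "qf w = 0"
    then have "(w' \<bullet> u1)^2 = (norm w')^2" using qw by (simp add: power2_norm_eq_inner)
    then have "\<bar>w' \<bullet> u1\<bar> = norm w'" by (metis abs_of_nonneg norm_ge_zero real_sqrt_abs)
    moreover have "norm u1 = 1" using uu(1) by (simp add: norm_eq_sqrt_inner)
    ultimately have "\<bar>w' \<bullet> u1\<bar> = norm w' * norm u1" by simp
    then have "norm w' *\<^sub>R u1 = norm u1 *\<^sub>R w' \<or> norm w' *\<^sub>R u1 = - norm u1 *\<^sub>R w'"
      by (simp add: norm_cauchy_schwarz_abs_eq)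
    then have "(norm w' *\<^sub>R u1) \<bullet> d2 = 0"
    proof
      assume h: "norm w' *\<^sub>R u1 = norm u1 *\<^sub>R w'" show ?thesis unfolding h using wo(2) by simp
    next
      assume h: "norm w' *\<^sub>R u1 = - norm u1 *\<^sub>R w'" show ?thesis unfolding h using wo(2) by simp
    qed
    then have "u1 \<bullet> d2 = 0" using w'(1) by simp
    then have "u1 \<bullet> u2 = 1" using uu by (simp add: d2_d3_def inner_diff_right)
    then have "(u1 - u2) \<bullet> (u1 - u2) = 0" using uu
      by (simp add: inner_diff_left inner_diff_right inner_commute[of u2 u1])
    then show False using une by simp
  qed
  have qs: "qf (y0 + s *\<^sub>R w) = qf y0 + 2 * s * Bf y0 w + s^2 * qf w" for s
    by (simp add: qf_add qf_scale Bf_scale2)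
  have "\<exists>s. qf (y0 + s *\<^sub>R w) \<noteq> 0"
  proof (rule ccontr)
    assume "\<not> ?thesis"
    then have "qf (y0 + 0 *\<^sub>R w) = 0" "qf (y0 + 1 *\<^sub>R w) = 0" "qf (y0 + 2 *\<^sub>R w) = 0" by blast+
    then have "qf y0 = 0" "qf y0 + 2 * Bf y0 w + qf w = 0" "qf y0 + 4 * Bf y0 w + 4 * qf w = 0"
      unfolding qs by simp_all
    then show False using qwnz by simp
  qed
  then obtain s where s: "qf (y0 + s *\<^sub>R w) \<noteq> 0" by blast
  show ?thesis
    by (rule exI[of _ "y0 + s *\<^sub>R w"]) (simp add: s Bf_add1 Bf_scale1 y0 w)
qed



lemma alg0:
  fixes y r s :: "real^'n::{finite,linorder}"
  assumes r: "r \<in> Qset" and s: "s \<in> Qset" and rs: "r \<noteq> s" and ab: "a \<noteq> b" and c: "c \<noteq> 0"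
    and h1: "qf (y - a *\<^sub>R r) = 0" and h2: "qf (y - b *\<^sub>R r) = 0" and h3: "qf (y - c *\<^sub>R s) = 0"
  shows "y = 0"
proof -
  have qr: "qf r = 0" and qs: "qf s = 0" using r s by (simp_all add: Q_qf)
  have e1: "qf y = 2 * a * Bf y r" using h1 qr by (simp add: qf_diff qf_scale Bf_scale2)
  have e2: "qf y = 2 * b * Bf y r" using h2 qr by (simp add: qf_diff qf_scale Bf_scale2)
  have Byr: "Bf y r = 0" using e1 e2 ab by simp
  then have qy: "qf y = 0" using e1 by simp
  have "y $ tidx *\<^sub>R r = r $ tidx *\<^sub>R y" using null_parallel[OF qr qy] Byr by (simp add: Bf_sym)
  then have yr: "y = y $ tidx *\<^sub>R r" using r by (simp add: Qset_iff)
  have Brs: "Bf r s \<noteq> 0" using Bf_Q_eq[OF r s] rs by blast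
  have "qf (y - c *\<^sub>R s) = - 2 * c * (y $ tidx) * Bf r s"
    by (subst yr) (simp add: qf_diff qf_scale Bf_scale1 Bf_scale2 qr qs)
  then have "y $ tidx = 0" using h3 c Brs by simp
  then show ?thesis using yr by simp
qed

context cp begin

definition tau :: "real^'n::{finite,linorder} \<Rightarrow> real^'n::{finite,linorder} \<Rightarrow> real" where
  "tau p z = qf z / (2 * Bf z p)"

lemma isCont_hh: "isCont (\<lambda>t. \<phi> (t *\<^sub>R p) $ tidx) t"
proof -
  have "isCont (\<lambda>t. \<phi> (t *\<^sub>R p)) t"
    by (rule isCont_o2[OF _ isCont_phi]) (intro continuous_intros)
  then show ?thesis by (rule isCont_vec_nth)
qed

lemma isCont_hh_tau:
  assumes "Bf x p \<noteq> 0" shows "isCont (\<lambda>z. \<phi> (tau p z *\<^sub>R q) $ tidx) x"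
proof -
  have "isCont (tau p) x" unfolding tau_def using assms
    by (intro continuous_intros) auto
  then show ?thesis using isCont_o2[OF _ isCont_hh] by blast
qed

lemma coh_rep:
  assumes p: "p \<in> Qset" and B: "Bf z p \<noteq> 0"
  shows "qf (\<phi> z - (\<phi> (tau p z *\<^sub>R p) $ tidx) *\<^sub>R varphi \<phi> 0 p) = 0"
  using coh_point[OF p B] vp_rep[OF p, of "tau p z"] by (simp add: tau_def)

lemma vp_inj:
  assumes n4: "CARD('n) \<ge> 4" and gen: "generic \<phi> 0"
    and nc: "\<exists>p1\<in>Qset. \<exists>p2\<in>Qset. varphi \<phi> 0 p1 \<noteq> varphi \<phi> 0 p2"
  shows "inj_on (varphi \<phi> 0) Qset"
proof (rule inj_onI, rule ccontr)
  fix p1 p2 assume Q1: "p1 \<in> Qset" and Q2: "p2 \<in> Qset" and eq: "varphi \<phi> 0 p1 = varphi \<phi> 0 p2"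
    and ne12: "p1 \<noteq> p2"
  define r where "r = varphi \<phi> 0 p1"
  define hh where "hh p t = \<phi> (t *\<^sub>R p) $ tidx" for p t
  obtain p3 where Q3: "p3 \<in> Qset" and rs: "r \<noteq> varphi \<phi> 0 p3"
    using nc by (metis r_def)
  define s where "s = varphi \<phi> 0 p3"
  have ne13: "p1 \<noteq> p3" and ne23: "p2 \<noteq> p3" using rs eq by (auto simp: r_def)
  have rQ: "r \<in> Qset" and sQ: "s \<in> Qset" using vp_Q Q1 Q3 by (auto simp: r_def s_def)
  have rs': "r \<noteq> s" using rs by (simp add: s_def)
  obtain \<gamma> where g: "\<phi> (\<gamma> *\<^sub>R p3) \<noteq> 0" using nonvanish[OF Q3] by blast
  have hg: "hh p3 \<gamma> \<noteq> 0" using g vp_rep[OF Q3, of \<gamma>] by (metis hh_def scale_zero_left)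
  have g0: "\<gamma> \<noteq> 0" using g phi0 by auto
  have claim: "hh p1 \<alpha> = hh p2 \<beta>" if a0: "\<alpha> \<noteq> 0" and b0: "\<beta> \<noteq> 0" for \<alpha> \<beta>
  proof (rule ccontr)
    assume hne: "hh p1 \<alpha> \<noteq> hh p2 \<beta>"
    obtain y where y: "Bf y p1 = 1/(2*\<alpha>)" "Bf y p2 = 1/(2*\<beta>)" "Bf y p3 = 1/(2*\<gamma>)" "qf y \<noteq> 0"
      using solve3[OF n4 Q1 Q2 Q3 ne12 ne13 ne23] by blast
    define x where "x = (1 / qf y) *\<^sub>R y"
    have qx: "qf x = 1 / qf y" using y(4) by (simp add: x_def qf_scale power2_eq_square)
    have Bx: "Bf x p1 = 1/(2*\<alpha>*qf y)" "Bf x p2 = 1/(2*\<beta>*qf y)" "Bf x p3 = 1/(2*\<gamma>*qf y)"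
      using y by (simp_all add: x_def Bf_scale1)
    have Bxnz: "Bf x p1 \<noteq> 0" "Bf x p2 \<noteq> 0" "Bf x p3 \<noteq> 0" using Bx a0 b0 g0 y(4) by simp_all
    have tx: "tau p1 x = \<alpha>" "tau p2 x = \<beta>" "tau p3 x = \<gamma>"
      using Bx qx a0 b0 g0 y(4) by (simp_all add: tau_def)
    define F where "F z = hh p1 (tau p1 z) - hh p2 (tau p2 z)" for z
    define G where "G z = hh p3 (tau p3 z)" for z
    have cF: "isCont F x" unfolding F_def hh_def
      by (intro isCont_diff isCont_hh_tau Bxnz)
    have cG: "isCont G x" unfolding G_def hh_def by (intro isCont_hh_tau Bxnz)
    have cB: "isCont (\<lambda>z. Bf z p) x" for p by (intro continuous_intros)
    have Fx: "F x \<noteq> 0" using hne tx by (simp add: F_def)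
    have Gx: "G x \<noteq> 0" using hg tx by (simp add: G_def)
    obtain e1 where e1: "e1 > 0" "\<And>z. dist x z < e1 \<Longrightarrow> F z \<noteq> 0" using continuous_at_avoid[OF cF Fx] by blast
    obtain e2 where e2: "e2 > 0" "\<And>z. dist x z < e2 \<Longrightarrow> G z \<noteq> 0" using continuous_at_avoid[OF cG Gx] by blast
    obtain e3 where e3: "e3 > 0" "\<And>z. dist x z < e3 \<Longrightarrow> Bf z p1 \<noteq> 0" using continuous_at_avoid[OF cB Bxnz(1)] by blast
    obtain e4 where e4: "e4 > 0" "\<And>z. dist x z < e4 \<Longrightarrow> Bf z p2 \<noteq> 0" using continuous_at_avoid[OF cB Bxnz(2)] by blast
    obtain e5 where e5: "e5 > 0" "\<And>z. dist x z < e5 \<Longrightarrow> Bf z p3 \<noteq> 0" using continuous_at_avoid[OF cB Bxnz(3)] by blast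
    define e where "e = min e1 (min e2 (min e3 (min e4 e5)))"
    have epos: "e > 0" using e1 e2 e3 e4 e5 by (simp add: e_def)
    have "ball x e \<subseteq> \<phi> -` {0}"
    proof
      fix z assume "z \<in> ball x e"
      then have dz: "dist x z < e" by simp
      have F: "F z \<noteq> 0" and G: "G z \<noteq> 0" and B1: "Bf z p1 \<noteq> 0" and B2: "Bf z p2 \<noteq> 0" and B3: "Bf z p3 \<noteq> 0"
        using dz e1 e2 e3 e4 e5 by (auto simp: e_def)
      have h1: "qf (\<phi> z - hh p1 (tau p1 z) *\<^sub>R r) = 0" using coh_rep[OF Q1 B1] by (simp add: hh_def r_def)
      have h2: "qf (\<phi> z - hh p2 (tau p2 z) *\<^sub>R r) = 0" using coh_rep[OF Q2 B2] eq by (simp add: hh_def r_def)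
      have h3: "qf (\<phi> z - hh p3 (tau p3 z) *\<^sub>R s) = 0" using coh_rep[OF Q3 B3] by (simp add: hh_def s_def)
      have "\<phi> z = 0"
        by (rule alg0[OF rQ sQ rs' _ _ h1 h2 h3]) (use F G in \<open>simp_all add: F_def G_def\<close>)
      then show "z \<in> \<phi> -` {0}" by simp
    qed
    then have "x \<in> interior (\<phi> -` {0})" using epos by (auto simp: mem_interior)
    then have "\<phi> 0 \<in> Wset \<phi>" using phi0 by (auto simp: Wset_def)
    then show False using gen by (simp add: generic_def)
  qed
  have c1: "hh p1 \<alpha> = hh p2 1" if "\<alpha> \<noteq> 0" for \<alpha> using claim[OF that] by simp
  have z2: "hh p2 1 = 0"
  proof (rule ccontr)
    assume nz: "hh p2 1 \<noteq> 0"
    have "hh p1 0 \<noteq> hh p2 1" using nz phi0 by (simp add: hh_def)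
    from continuous_at_avoid[OF isCont_hh[where p=p1 and t=0, folded hh_def] this]
    obtain e where "e > 0" "\<And>y. dist 0 y < e \<Longrightarrow> hh p1 y \<noteq> hh p2 1" by blast
    then have "hh p1 (e/2) \<noteq> hh p2 1" by (simp add: dist_real_def)
    then show False using c1[of "e/2"] \<open>e > 0\<close> by simp
  qed
  have "\<phi> (t *\<^sub>R p1) = 0" for t
  proof (cases "t = 0")
    case True then show ?thesis using phi0 by simp
  next
    case False then have "hh p1 t = 0" using c1 z2 by simp
    then show ?thesis using vp_rep[OF Q1, of t] by (simp add: hh_def)
  qed
  then show False using nonvanish[OF Q1] by blast
qed

end


lemma Qset_sphere: "Qset = sphere (et::real^'n::{finite,linorder}) 1 \<inter> {x. et \<bullet> x = 1}"
proof (intro set_eqI iffI)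
  fix x :: "real^'n::{finite,linorder}"
  assume x: "x \<in> Qset"
  then have "x - et = sp x" using decomp[of x] by (simp add: Qset_iff algebra_simps)
  then have "dist et x = norm (sp x)" using norm_minus_commute[of et x] by (simp add: dist_norm)
  also have "\<dots> = 1" using x by (simp add: norm_eq_sqrt_inner Qset_iff)
  finally have "dist et x = 1" .
  then show "x \<in> sphere et 1 \<inter> {x. et \<bullet> x = 1}" using x by (simp add: Qset_iff inner_commute inner_et)
next
  fix x :: "real^'n::{finite,linorder}"
  assume x: "x \<in> sphere et 1 \<inter> {x. et \<bullet> x = 1}"
  then have xt: "x $ tidx = 1" by (simp add: inner_commute inner_et)
  then have "x = sp x + et" using decomp[of x] by simp
  then have "x - et = sp x" by (metis add_diff_cancel_right')
  moreover have "norm (x - et) = 1" using x by (simp add: dist_norm norm_minus_commute)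
  ultimately have "sp x \<bullet> sp x = 1" by (metis norm_eq_1)
  then show "x \<in> Qset" using xt by (simp add: Qset_iff)
qed

lemma compact_Qset: "compact Qset"
  unfolding Qset_sphere
  by (intro compact_Int_closed compact_sphere closed_hyperplane)

lemma surj_Q:
  fixes f :: "real^'n::{finite,linorder} \<Rightarrow> real^'n::{finite,linorder}"
  assumes n4: "CARD('n) \<ge> 4" and contf: "continuous_on Qset f" and injf: "inj_on f Qset"
    and fim: "f ` Qset \<subseteq> Qset"
  shows "f ` Qset = Qset"
proof (rule ccontr)
  assume "f ` Qset \<noteq> Qset"
  then obtain z where zQ: "z \<in> Qset" and zn: "z \<notin> f ` Qset" using fim by blast
  define H :: "(real^'n::{finite,linorder}) set" where "H = {x. et \<bullet> x = 1}"
  define U where "U = cball et 1 \<inter> H"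
  have affH: "affine H" by (simp add: H_def affine_hyperplane)
  have etH: "et \<in> H" by (simp add: H_def inner_et)
  have convU: "convex U" and bU: "bounded U"
    by (simp_all add: U_def H_def convex_Int convex_hyperplane bounded_Int)
  have rf: "rel_frontier U = Qset"
  proof -
    have "rel_frontier (cball et 1 \<inter> H) = frontier (cball et 1) \<inter> H"
    proof (rule convex_affine_rel_frontier_Int[OF convex_cball affH])
      have "et \<in> interior (cball et 1) \<inter> H" using etH by simp
      then show "interior (cball et 1) \<inter> H \<noteq> {}" by (metis empty_iff)
    qed
    then show ?thesis by (simp add: U_def Qset_sphere H_def)
  qed
  have adH: "aff_dim H = int DIM(real^'n::{finite,linorder}) - 1"
  proof -
    have "aff_dim (UNIV \<inter> H) = (if UNIV \<inter> H = {} then -1 else if UNIV \<subseteq> H then aff_dim (UNIV :: (real^'n::{finite,linorder}) set) else aff_dim (UNIV :: (real^'n::{finite,linorder}) set) - 1)"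
      unfolding H_def by (rule aff_dim_affine_Int_hyperplane) simp
    moreover have "UNIV \<inter> H \<noteq> {}" using etH by auto
    moreover have "0 \<notin> H" by (simp add: H_def)
    then have "\<not> UNIV \<subseteq> H" by blast
    ultimately show ?thesis by simp
  qed
  have adU: "aff_dim U = aff_dim H"
  proof -
    have "et \<in> H \<inter> interior (cball et 1)" using etH by simp
    then have "H \<inter> interior (cball et 1) \<noteq> {}" by (metis empty_iff)
    then have "aff_dim (H \<inter> cball et 1) = aff_dim H"
      by (rule aff_dim_convex_Int_nonempty_interior[OF affine_imp_convex[OF affH]])
    then show ?thesis by (simp add: U_def Int_commute)
  qed
  have DIMn: "DIM(real^'n::{finite,linorder}) = CARD('n)" by simp
  have l1: "- 1 \<le> aff_dim U - 1" using adU adH n4 DIMn by linarith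
  have l2: "aff_dim U - 1 \<le> aff_dim (UNIV :: (real^'n::{finite,linorder}) set)" using adU adH by simp
  obtain T :: "(real^'n::{finite,linorder}) set" where affT: "affine T" and adT: "aff_dim T = aff_dim U - 1"
    using choose_affine_subset[OF affine_UNIV l1 l2] by metis
  have "rel_frontier U - {z} homeomorphic T"
    by (rule homeomorphic_punctured_sphere_affine_gen[OF convU bU _ affT]) (use zQ rf adT in auto)
  then obtain h k where hk: "homeomorphism (Qset - {z}) T h k" using rf by (auto simp: homeomorphic_def)
  define g where "g = h \<circ> f"
  have fim': "f ` Qset \<subseteq> Qset - {z}" using fim zn by blast
  have contg: "continuous_on Qset g" unfolding g_def
    by (rule continuous_on_compose[OF contf continuous_on_subset[OF homeomorphism_cont1[OF hk] fim']])
  have injh: "inj_on h (Qset - {z})"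
    by (rule inj_on_inverseI[where g=k]) (use hk in \<open>auto simp: homeomorphism_def\<close>)
  have injg: "inj_on g Qset" unfolding g_def
    by (rule comp_inj_on[OF injf inj_on_subset[OF injh fim']])
  have gim: "g ` Qset \<subseteq> T" using fim' hk by (auto simp: g_def homeomorphism_def)
  have ope: "openin (top_of_set T) (g ` Qset)"
    by (rule invariance_of_domain_sphere_affine_set_gen[OF contg injg image_subset_iff_funcset[THEN iffD1, OF gim] bU convU affT])
       (use adT rf in auto)
  have cg: "compact (g ` Qset)" by (rule compact_continuous_image[OF contg compact_Qset])
  have clo: "closedin (top_of_set T) (g ` Qset)" by (rule closed_subset[OF gim compact_imp_closed[OF cg]])
  have "connected T" using affT by (simp add: affine_imp_convex convex_connected)
  then have "g ` Qset = {} \<or> g ` Qset = T" using ope clo unfolding connected_clopen by blast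
  then have "T = g ` Qset" using zQ by auto
  then have "bounded T" using cg compact_imp_bounded by auto
  then have "T = {} \<or> (\<exists>a. T = {a})" using affine_bounded_eq_trivial[OF affT] by simp
  then have "aff_dim T \<le> 0" by auto
  then show False using adT adU adH n4 by simp
qed


theorem lemma4p7:
  fixes \<phi> :: "real^'n::{finite,linorder} \<Rightarrow> real^'n::{finite,linorder}"
  assumes "CARD('n) \<ge> 4"
    and "continuous_on UNIV \<phi>"
    and "coherency_preserver \<phi>"
    and "\<not> degenerate \<phi>"
    and "\<phi> 0 = 0"
    and "\<exists>p1\<in>Qset. \<exists>p2\<in>Qset. varphi \<phi> 0 p1 \<noteq> varphi \<phi> 0 p2"
    and "generic \<phi> 0"
  shows "\<exists>g. homeomorphism Qset Qset (varphi \<phi> 0) g"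
proof -
  interpret cp \<phi> using assms(2-5) by unfold_locales
  have inj: "inj_on (varphi \<phi> 0) Qset" by (rule vp_inj[OF assms(1) assms(7) assms(6)])
  have surj: "varphi \<phi> 0 ` Qset = Qset"
    by (rule surj_Q[OF assms(1) vp_cont inj]) (use vp_Q in auto)
  show ?thesis by (rule homeomorphism_compact[OF compact_Qset vp_cont surj inj])
qed

end
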